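(* Let $N$ be a positive-integer-valued random variable with probability generating function $Q$ (so $Q$ is a continuous strictly increasing bijection of $[0,1]$ onto itself, with inverse $Q^{-1}$). (i) If $Q$ satisfies $$1-Q(1-s)=Q^{-1}(s)\quad\text{for all }0<s<1,$$ then for every continuous d.f. $F$ on $\mathbb{R}$, every $a\in\mathbb{R}$ and $b>0$: $Q[F(x)]=F(a+bx)$ for all $x$ holds if and only if $Q[\bar F(a+bx)]=\bar F(x)$ for all $x$. That is, $N$-max stability of $F$ is equivalent to $N$-min stability of $F$ (with the same constants). (ii) Conversely, if there is a continuous d.f. $F$ on $\mathbb{R}$ with $\{F(x):x\in\mathbb{R}\}\supseteq(0,1)$ and constants $a\in\mathbb{R}$, $b>0$ such that both $Q[F(x)]=F(a+bx)$ and $Q[\bar F(a+bx)]=\bar F(x)$ hold for all $x\in\mathbb{R}$, then $1-Q(1-s)=Q^{-1}(s)$ for all $0<s<1$.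
   Context: For a continuous d.f. $F$ on $\mathbb{R}$ and a positive-integer-valued random variable $N$ with PGF $Q$, $F$ is called $N$-max stable if $Q[F(x)]=F(a+bx)$ for all $x\in\mathbb{R}$ and some $a\in\mathbb{R}$, $b>0$, and $N$-min stable if $Q[\bar F(a+bx)]=\bar F(x)$ for all $x\in\mathbb{R}$ and some $a\in\mathbb{R}$, $b>0$, where $\bar F=1-F$. *)

theory Defs
  imports "HOL-Probability.Probability"
begin

definition pgf :: "nat pmf \<Rightarrow> real \<Rightarrow> real" where
  "pgf N s = (\<Sum>k. pmf N k * s ^ k)"

definition pgf_inv :: "nat pmf \<Rightarrow> real \<Rightarrow> real" where
  "pgf_inv N = the_inv_into {0..1} (pgf N)"

definition cont_df :: "(real \<Rightarrow> real) \<Rightarrow> bool" where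
  "cont_df F \<longleftrightarrow> mono F \<and> continuous_on UNIV F \<and>
     (F \<longlongrightarrow> 0) at_bot \<and> (F \<longlongrightarrow> 1) at_top"

end

theory Submission
  imports Defs
begin

lemma pmf_sums1: "pmf N sums 1"
  using sums_infsetsum_nat'[OF pmf_abs_summable[of N UNIV]] infsetsum_pmf_eq_1[of N UNIV]
  by simp

lemma pgf_summable:
  assumes "s \<in> {0..1}"
  shows "summable (\<lambda>k. pmf N k * s ^ k)"
proof (rule summable_comparison_test'[where g="pmf N"])
  show "summable (pmf N)" using pmf_sums1 sums_summable by blast
  fix n
  have "s ^ n \<le> 1" using assms by (simp add: power_le_one)
  moreover have "0 \<le> s ^ n" using assms by simp
  ultimately show "norm (pmf N n * s ^ n) \<le> pmf N n"
    by (simp add: mult_left_le abs_mult)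
qed

lemma pgf_one: "pgf N 1 = 1"
  using pmf_sums1 unfolding pgf_def by (simp add: sums_iff)

lemma pgf_zero: assumes "pmf N 0 = 0" shows "pgf N 0 = 0"
proof -
  have "(\<lambda>k. pmf N k * (0::real) ^ k) = (\<lambda>k. 0)"
    using assms by (auto simp: fun_eq_iff power_0_left)
  then show ?thesis unfolding pgf_def by simp
qed

lemma pgf_strict:
  assumes "pmf N 0 = 0" "0 \<le> s" "s < t" "t \<le> 1"
  shows "pgf N s < pgf N t"
proof -
  obtain k where k: "pmf N k > 0"
  proof (rule ccontr)
    assume "\<not> thesis"
    with that have "\<forall>k. pmf N k = 0" by (metis pmf_nonneg less_eq_real_def)
    then have "pmf N = (\<lambda>k. 0)" by auto
    with pmf_sums1[of N] show False using sums_unique2 sums_zero by fastforce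
  qed
  with assms have k1: "k \<ge> 1" by (cases k) auto
  have st: "summable (\<lambda>k. pmf N k * s ^ k)" "summable (\<lambda>k. pmf N k * t ^ k)"
    using assms by (auto intro!: pgf_summable)
  define g where "g k = pmf N k * t ^ k - pmf N k * s ^ k" for k
  have sg: "summable g" unfolding g_def by (rule summable_diff[OF st(2) st(1)])
  have g0: "0 \<le> g n" for n
    unfolding g_def using assms
    by (simp add: right_diff_distrib[symmetric] power_mono)
  have "s ^ k < t ^ k" using assms k1 by (intro power_strict_mono) auto
  then have "0 < g k" unfolding g_def using k by (simp add: right_diff_distrib[symmetric])
  then have "0 < suminf g" using suminf_pos_iff[OF sg] g0 by blast
  also have "suminf g = pgf N t - pgf N s"
    unfolding g_def pgf_def using suminf_diff[OF st(2) st(1)] by simp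
  finally show ?thesis by simp
qed

lemma pgf_inj: assumes "pmf N 0 = 0" shows "inj_on (pgf N) {0..1}"
proof (rule inj_onI)
  fix x y assume "x \<in> {0..1}" "y \<in> {0..1}" "pgf N x = pgf N y"
  then show "x = y" using pgf_strict[OF assms, of x y] pgf_strict[OF assms, of y x]
    by (cases x y rule: linorder_cases) auto
qed

lemma pgf_inv_pgf: assumes "pmf N 0 = 0" "t \<in> {0..1}" shows "pgf_inv N (pgf N t) = t"
  unfolding pgf_inv_def using the_inv_into_f_f[OF pgf_inj[OF assms(1)] assms(2)] .

lemma cont_df_range: assumes "cont_df F" shows "F x \<in> {0..1}"
proof -
  have m: "mono F" and l0: "(F \<longlongrightarrow> 0) at_bot" and l1: "(F \<longlongrightarrow> 1) at_top"
    using assms unfolding cont_df_def by auto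
  have "0 \<le> F x"
  proof (rule tendsto_upperbound[OF l0])
    show "\<forall>\<^sub>F y in at_bot. F y \<le> F x"
      unfolding eventually_at_bot_linorder using m by (auto simp: mono_def)
  qed simp
  moreover have "F x \<le> 1"
  proof (rule tendsto_lowerbound[OF l1])
    show "\<forall>\<^sub>F y in at_top. F x \<le> F y"
      unfolding eventually_at_top_linorder using m by (auto simp: mono_def)
  qed simp
  ultimately show ?thesis by simp
qed

theorem theorem2p2:
  fixes N :: "nat pmf"
  assumes pos: "pmf N 0 = 0"
  shows "((\<forall>s\<in>{0<..<1}. 1 - pgf N (1 - s) = pgf_inv N s) \<longrightarrow>
           (\<forall>F a b. cont_df F \<and> b > 0 \<longrightarrow>
              ((\<forall>x. pgf N (F x) = F (a + b * x)) \<longleftrightarrow>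
               (\<forall>x. pgf N (1 - F (a + b * x)) = 1 - F x))))
       \<and> ((\<exists>F a b. cont_df F \<and> {0<..<1} \<subseteq> range F \<and> b > 0 \<and>
              (\<forall>x. pgf N (F x) = F (a + b * x)) \<and>
              (\<forall>x. pgf N (1 - F (a + b * x)) = 1 - F x)) \<longrightarrow>
           (\<forall>s\<in>{0<..<1}. 1 - pgf N (1 - s) = pgf_inv N s))"
proof (intro conjI impI allI)
  have inj: "\<And>u v. u \<in> {0..1} \<Longrightarrow> v \<in> {0..1} \<Longrightarrow> pgf N u = pgf N v \<Longrightarrow> u = v"
    using pgf_inj[OF pos] by (meson inj_onD)
  note z = pgf_zero[OF pos] and o = pgf_one[of N]
  {
    assume I: "\<forall>s\<in>{0<..<1}. 1 - pgf N (1 - s) = pgf_inv N s"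
    fix F :: "real \<Rightarrow> real" and a b :: real
    assume Fb: "cont_df F \<and> b > 0"
    then have F01: "\<And>x. F x \<in> {0..1}" using cont_df_range by blast
    show "(\<forall>x. pgf N (F x) = F (a + b * x)) \<longleftrightarrow>
               (\<forall>x. pgf N (1 - F (a + b * x)) = 1 - F x)"
    proof (intro iffI allI)
      fix x assume H: "\<forall>x. pgf N (F x) = F (a + b * x)"
      define s where "s = F (a + b * x)"
      have sQ: "s = pgf N (F x)" using H s_def by simp
      have "s \<in> {0..1}" using F01 s_def by simp
      then consider "s = 0" | "s = 1" | "s \<in> {0<..<1}" by fastforce
      then show "pgf N (1 - F (a + b * x)) = 1 - F x"
      proof cases
        case 1
        then have "F x = 0" using inj[OF F01 _, of 0] sQ z by auto
        then show ?thesis using 1 o s_def by simp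
      next
        case 2
        then have "F x = 1" using inj[OF F01 _, of 1] sQ o by auto
        then show ?thesis using 2 z s_def by simp
      next
        case 3
        then have "1 - pgf N (1 - s) = pgf_inv N s" using I by blast
        also have "\<dots> = F x" using sQ pgf_inv_pgf[OF pos F01] by simp
        finally show ?thesis using s_def by simp
      qed
    next
      fix x assume H: "\<forall>x. pgf N (1 - F (a + b * x)) = 1 - F x"
      define t where "t = F x"
      define u where "u = 1 - F (a + b * x)"
      have u01: "u \<in> {0..1}" using F01[of "a + b * x"] u_def by simp
      have Qu: "pgf N u = 1 - t" using H t_def u_def by simp
      have "t \<in> {0..1}" using F01 t_def by simp
      then consider "t = 0" | "t = 1" | "t \<in> {0<..<1}" by fastforce
      then show "pgf N (F x) = F (a + b * x)"
      proof cases
        case 1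
        then have "u = 1" using inj[OF u01, of 1] Qu o by auto
        then show ?thesis using 1 z t_def u_def by simp
      next
        case 2
        then have "u = 0" using inj[OF u01, of 0] Qu z by auto
        then show ?thesis using 2 o t_def u_def by simp
      next
        case 3
        then have "1 - t \<in> {0<..<1}" by auto
        then have "1 - pgf N (1 - (1 - t)) = pgf_inv N (1 - t)" using I by blast
        also have "\<dots> = u" using Qu pgf_inv_pgf[OF pos u01] by simp
        finally show ?thesis using t_def u_def by simp
      qed
    qed
  }
  {
    assume "\<exists>F a b. cont_df F \<and> {0<..<1} \<subseteq> range F \<and> b > 0 \<and>
              (\<forall>x. pgf N (F x) = F (a + b * x)) \<and>
              (\<forall>x. pgf N (1 - F (a + b * x)) = 1 - F x)"
    then obtain F a b where F: "cont_df F" "{0<..<1} \<subseteq> range F" "b > 0"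
      "\<forall>x. pgf N (F x) = F (a + b * x)" "\<forall>x. pgf N (1 - F (a + b * x)) = 1 - F x"
      by blast
    show "\<forall>s\<in>{0<..<1}. 1 - pgf N (1 - s) = pgf_inv N s"
    proof
      fix s :: real assume s: "s \<in> {0<..<1}"
      then obtain y where y: "s = F y" using F(2) by blast
      define x where "x = (y - a) / b"
      have ax: "a + b * x = y" using F(3) x_def by simp
      have F01: "F x \<in> {0..1}" using cont_df_range[OF F(1)] .
      have "pgf N (F x) = s" using F(4) ax y by simp
      then have "pgf_inv N s = F x" using pgf_inv_pgf[OF pos F01] by simp
      moreover have "pgf N (1 - s) = 1 - F x" using F(5) ax y by metis
      ultimately show "1 - pgf N (1 - s) = pgf_inv N s" by simp
    qed
  }
qed

end
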